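(* There exists a connected highly arc transitive digraph $D$ with an epimorphism $\varphi:D\to Z$ onto the integer-line digraph such that all fibers $\varphi^{-1}(i)$, $i\in\mathbb{Z}$, are finite, and whose associated digraph $\Delta(D)$ is not complete bipartite.
   Context: The integer-line digraph is $Z=(\mathbb{Z},\{(i,i+1)\mid i\in\mathbb{Z}\})$; an epimorphism is a surjective digraph homomorphism. An $n$-arc is a sequence of directed edges $e_0,\dots,e_{n-1}$ with the terminal vertex of $e_i$ equal to the initial vertex of $e_{i+1}$; a digraph is highly arc transitive if for every $n\in\mathbb{N}$ its automorphism group acts transitively on its (nonempty set of) $n$-arcs. An alternating walk is a sequence of edges $e_0,\dots,e_{n-1}$ in which consecutive edges alternately share their initial vertex and their terminal vertex. Two edges are reachable from each other if some alternating walk contains both; this is an equivalence relation. For an edge $e$, $\Delta(e)$ is the subgraph spanned by the reachability class of $e$; in a highly arc transitive digraph all $\Delta(e)$ are isomorphic and their common isomorphism type is the associated digraph $\Delta(D)$. *)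

theory Defs
  imports Main
begin

definition digraph :: "'a set \<Rightarrow> ('a \<times> 'a) set \<Rightarrow> bool" where
  "digraph V E \<longleftrightarrow> E \<subseteq> V \<times> V"

definition dconnected :: "'a set \<Rightarrow> ('a \<times> 'a) set \<Rightarrow> bool" where
  "dconnected V E \<longleftrightarrow> V \<noteq> {} \<and> (\<forall>u\<in>V. \<forall>v\<in>V. (u, v) \<in> (E \<union> E\<inverse>)\<^sup>*)"

definition epi_Z :: "'a set \<Rightarrow> ('a \<times> 'a) set \<Rightarrow> ('a \<Rightarrow> int) \<Rightarrow> bool" where
  "epi_Z V E \<phi> \<longleftrightarrow> (\<forall>(u, v)\<in>E. \<phi> v = \<phi> u + 1) \<and> \<phi> ` V = UNIV"

definition automorphism :: "'a set \<Rightarrow> ('a \<times> 'a) set \<Rightarrow> ('a \<Rightarrow> 'a) \<Rightarrow> bool" where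
  "automorphism V E f \<longleftrightarrow> bij_betw f V V \<and>
     (\<forall>u\<in>V. \<forall>v\<in>V. (u, v) \<in> E \<longleftrightarrow> (f u, f v) \<in> E)"

definition is_arc :: "('a \<times> 'a) set \<Rightarrow> nat \<Rightarrow> ('a \<times> 'a) list \<Rightarrow> bool" where
  "is_arc E n es \<longleftrightarrow> length es = n \<and> set es \<subseteq> E \<and>
     (\<forall>i. Suc i < n \<longrightarrow> snd (es ! i) = fst (es ! Suc i))"

definition map_edges :: "('a \<Rightarrow> 'a) \<Rightarrow> ('a \<times> 'a) list \<Rightarrow> ('a \<times> 'a) list" where
  "map_edges f es = map (\<lambda>(u, v). (f u, f v)) es"

definition highly_arc_transitive :: "'a set \<Rightarrow> ('a \<times> 'a) set \<Rightarrow> bool" where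
  "highly_arc_transitive V E \<longleftrightarrow>
     (\<forall>n. (\<exists>es. is_arc E n es) \<and>
          (\<forall>es1 es2. is_arc E n es1 \<and> is_arc E n es2 \<longrightarrow>
             (\<exists>f. automorphism V E f \<and> map_edges f es1 = es2)))"

definition share_init :: "'a \<times> 'a \<Rightarrow> 'a \<times> 'a \<Rightarrow> bool" where
  "share_init e f \<longleftrightarrow> fst e = fst f"

definition share_term :: "'a \<times> 'a \<Rightarrow> 'a \<times> 'a \<Rightarrow> bool" where
  "share_term e f \<longleftrightarrow> snd e = snd f"

definition alternating_walk :: "('a \<times> 'a) set \<Rightarrow> ('a \<times> 'a) list \<Rightarrow> bool" where
  "alternating_walk E es \<longleftrightarrow> es \<noteq> [] \<and> set es \<subseteq> E \<and>
     ((\<forall>i. Suc i < length es \<longrightarrow>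
         (if even i then share_init (es ! i) (es ! Suc i) else share_term (es ! i) (es ! Suc i))) \<or>
      (\<forall>i. Suc i < length es \<longrightarrow>
         (if even i then share_term (es ! i) (es ! Suc i) else share_init (es ! i) (es ! Suc i))))"

definition reachable :: "('a \<times> 'a) set \<Rightarrow> 'a \<times> 'a \<Rightarrow> 'a \<times> 'a \<Rightarrow> bool" where
  "reachable E e f \<longleftrightarrow> (\<exists>es. alternating_walk E es \<and> e \<in> set es \<and> f \<in> set es)"

definition Delta_edges :: "('a \<times> 'a) set \<Rightarrow> 'a \<times> 'a \<Rightarrow> ('a \<times> 'a) set" where
  "Delta_edges E e = {f. reachable E e f}"

definition Delta_verts :: "('a \<times> 'a) set \<Rightarrow> 'a \<times> 'a \<Rightarrow> 'a set" where
  "Delta_verts E e = fst ` Delta_edges E e \<union> snd ` Delta_edges E e"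

definition complete_bipartite :: "'a set \<Rightarrow> ('a \<times> 'a) set \<Rightarrow> bool" where
  "complete_bipartite V E \<longleftrightarrow>
     (\<exists>A B. A \<inter> B = {} \<and> A \<union> B = V \<and> A \<noteq> {} \<and> B \<noteq> {} \<and> E = A \<times> B)"

end

theory Submission imports Defs "HOL-Library.Nat_Bijection" begin
lemma h1: "a < 3 \<Longrightarrow> b < 3 \<Longrightarrow> (9 * k + 3 * a + b) div 9 = (k::nat)"
proof -
  assume "a < 3" "b < 3"
  then have "3*a+b < 9" by linarith
  then have "(3*a+b + 9 * k) div 9 = k" by simp
  then show ?thesis by (simp add: ac_simps)
qed
lemma h2: "a < 3 \<Longrightarrow> b < 3 \<Longrightarrow> (9 * k + 3 * a + b) div 3 mod 3 = (a::nat)"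
proof -
  assume "a < 3" "b < 3"
  then have "(b + 3 * (3 * k + a)) div 3 = 3*k+a" by simp
  then have "(9 * k + 3 * a + b) div 3 = 3*k+a" by (simp add: ac_simps add_mult_distrib2)
  then show ?thesis using \<open>a<3\<close> by simp
qed
lemma h3: "a < 3 \<Longrightarrow> b < 3 \<Longrightarrow> (9 * k + 3 * a + b) mod 3 = (b::nat)"
proof -
  assume "a < 3" "b < 3"
  have "(b + 3 * (3 * k + a)) mod 3 = b mod 3" by (simp only: mod_mult_self2)
  then have "(b + 3 * (3 * k + a)) mod 3 = b" using \<open>b<3\<close> by simp
  moreover have "9 * k + 3 * a + b = b + 3 * (3 * k + a)" by simp
  ultimately show ?thesis by metis
qed
lemma h4: "9 * (n div 9) + 3 * (n div 3 mod 3) + n mod 3 = (n::nat)"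
proof -
  have "n div 3 = 3 * (n div 3 div 3) + n div 3 mod 3" by simp
  moreover have "n div 3 div 3 = n div 9" by (simp add: div_mult2_eq[symmetric])
  moreover have "n = 3 * (n div 3) + n mod 3" by simp
  ultimately show ?thesis by linarith
qed
definition lv :: "nat \<Rightarrow> int" where "lv n = int_decode (n div 9)"
definition fa :: "nat \<Rightarrow> nat" where "fa n = (n div 3) mod 3"
definition fb :: "nat \<Rightarrow> nat" where "fb n = n mod 3"
definition enc :: "int \<Rightarrow> nat \<Rightarrow> nat \<Rightarrow> nat" where "enc i a b = 9 * int_encode i + 3 * a + b"

lemma enc_simps[simp]:
  assumes "a < 3" "b < 3"
  shows "lv (enc i a b) = i" "fa (enc i a b) = a" "fb (enc i a b) = b"
  using assms h1 h2 h3 by (simp_all add: lv_def fa_def fb_def enc_def)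

lemma fa_lt[simp]: "fa n < 3" and fb_lt[simp]: "fb n < 3"
  by (auto simp: fa_def fb_def)

lemma enc_dec[simp]: "enc (lv n) (fa n) (fb n) = n"
  using h4 by (simp add: lv_def fa_def fb_def enc_def)

lemma vert_eq: "u = v \<longleftrightarrow> lv u = lv v \<and> fa u = fa v \<and> fb u = fb v"
  by (metis enc_dec)

definition P3 :: "(nat \<Rightarrow> nat) \<Rightarrow> bool" where
  "P3 g \<longleftrightarrow> inj_on g {..<3} \<and> g ` {..<3} \<subseteq> {..<3}"

lemma three: "(x::nat) < 3 \<longleftrightarrow> x = 0 \<or> x = 1 \<or> x = 2" by auto

lemma perm_dist:
  assumes "a < 3" "b < 3" "c < 3" "d < 3" "a \<noteq> b" "c \<noteq> d"
  shows "\<exists>g. P3 g \<and> g a = c \<and> g b = d"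
proof -
  define g where "g x = (if x = a then c else if x = b then d else if x < 3 then 3 - c - d else x)" for x
  have img: "g x < 3" if "x < 3" for x
  proof -
    have "3 - c - d < (3::nat)" using assms by linarith
    then show ?thesis using assms that by (simp add: g_def)
  qed
  have inj: "x = y" if "x < 3" "y < 3" "g x = g y" for x y
  proof -
    have o: "z = a \<or> z = b \<or> (z \<noteq> a \<and> z \<noteq> b \<and> z < 3)" if "z < 3" for z
      using that by blast
    have t: "x = y" if "x \<noteq> a" "x \<noteq> b" "y \<noteq> a" "y \<noteq> b" "x < 3" "y < 3"
      using that assms by linarith
    have k1: "c \<noteq> 3 - c - d" "d \<noteq> 3 - c - d" using assms by arith+
    show ?thesis using \<open>g x = g y\<close> o[OF \<open>x<3\<close>] o[OF \<open>y<3\<close>] t k1 assms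
      unfolding g_def by (smt (verit))
  qed
  have "P3 g" unfolding P3_def inj_on_def using img inj by auto
  moreover have "g a = c" "g b = d" using assms by (auto simp: g_def)
  ultimately show ?thesis by blast
qed

lemma perm_ex:
  assumes "a < 3" "b < 3" "c < 3" "d < 3" "(a = b) = (c = d)"
  shows "\<exists>g. P3 g \<and> g a = c \<and> g b = d"
proof (cases "a = b")
  case True
  then have "c = d" using assms by simp
  obtain g where "P3 g" "g a = c" "g ((a+1) mod 3) = (c + 1) mod 3"
  proof -
    have "a \<noteq> (a+1) mod 3" "c \<noteq> (c+1) mod 3" using assms by presburger+
    then show ?thesis using perm_dist[of a "(a+1) mod 3" c "(c+1) mod 3"] assms that by auto
  qed
  then show ?thesis using True \<open>c = d\<close> by blast
next
  case False
  then show ?thesis using perm_dist assms by auto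
qed

definition E0 :: "(nat \<times> nat) set" where
  "E0 = {(u,v). lv v = lv u + 1 \<and> fb u \<noteq> fa v}"

lemma E0_iff: "(u,v) \<in> E0 \<longleftrightarrow> lv v = lv u + 1 \<and> fb u \<noteq> fa v"
  by (simp add: E0_def)

definition fmap :: "int \<Rightarrow> (int \<Rightarrow> nat \<Rightarrow> nat) \<Rightarrow> nat \<Rightarrow> nat" where
  "fmap d G x = enc (lv x + d) (G (lv x) (fa x)) (G (lv x + 1) (fb x))"

lemma P3_lt: "P3 g \<Longrightarrow> x < 3 \<Longrightarrow> g x < 3"
  unfolding P3_def by auto

lemma P3_inj: "P3 g \<Longrightarrow> x < 3 \<Longrightarrow> y < 3 \<Longrightarrow> g x = g y \<longleftrightarrow> x = y"
  unfolding P3_def inj_on_def by auto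

lemma P3_surj: "P3 g \<Longrightarrow> y < 3 \<Longrightarrow> \<exists>x<3. g x = y"
proof -
  assume "P3 g" "y < 3"
  then have "g ` {..<3} = {..<3}" unfolding P3_def by (intro endo_inj_surj) auto
  then show ?thesis using \<open>y<3\<close> by (metis imageE lessThan_iff)
qed

lemma fmap_simps:
  assumes "\<forall>j. P3 (G j)"
  shows "lv (fmap d G x) = lv x + d" "fa (fmap d G x) = G (lv x) (fa x)"
    "fb (fmap d G x) = G (lv x + 1) (fb x)"
  using assms P3_lt by (simp_all add: fmap_def)

lemma fmap_aut:
  assumes G: "\<forall>j. P3 (G j)"
  shows "automorphism UNIV E0 (fmap d G)"
proof -
  have inj: "inj (fmap d G)"
  proof (rule injI)
    fix x y assume eq: "fmap d G x = fmap d G y"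
    have l: "lv x = lv y" using arg_cong[OF eq, of lv] by (simp add: fmap_simps[OF G])
    have "G (lv x) (fa x) = G (lv x) (fa y)" using arg_cong[OF eq, of fa] l by (simp add: fmap_simps[OF G])
    then have a: "fa x = fa y" using P3_inj[OF G[rule_format] fa_lt fa_lt] by blast
    have "G (lv x + 1) (fb x) = G (lv x + 1) (fb y)" using arg_cong[OF eq, of fb] l by (simp add: fmap_simps[OF G])
    then have b: "fb x = fb y" using P3_inj[OF G[rule_format] fb_lt fb_lt] by blast
    have e: "lv x = lv y" "fa x = fa y" "fb x = fb y" using l a b by auto
    then show "x = y" using e(1) vert_eq[of x y] by blast
  qed
  have surj: "surj (fmap d G)"
  proof -
    have "y \<in> range (fmap d G)" for y
    proof -
      obtain a where a: "a < 3" "G (lv y - d) a = fa y" using P3_surj G fa_lt by blast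
      obtain b where b: "b < 3" "G (lv y - d + 1) b = fb y" using P3_surj G fb_lt by blast
      have "fmap d G (enc (lv y - d) a b) = y"
        unfolding vert_eq[of _ y] using a b fmap_simps[OF G] by simp
      then show ?thesis by (metis rangeI)
    qed
    then show ?thesis by blast
  qed
  have edge: "(u, v) \<in> E0 \<longleftrightarrow> (fmap d G u, fmap d G v) \<in> E0" for u v
  proof (cases "lv v = lv u + 1")
    case True
    then show ?thesis using fmap_simps[OF G] P3_inj[OF G[rule_format]] by (simp add: E0_iff)
  next
    case False
    then show ?thesis using fmap_simps[OF G] by (simp add: E0_iff)
  qed
  show ?thesis unfolding automorphism_def bij_betw_def using inj surj edge by auto
qed


definition pt :: "(nat \<times> nat) list \<Rightarrow> nat \<Rightarrow> nat \<Rightarrow> nat" where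
  "pt es n t = (if t < n then fst (es ! t) else snd (es ! (n - 1)))"

lemma arc_nth:
  assumes "is_arc E0 n es" "t < n"
  shows "es ! t = (pt es n t, pt es n (Suc t))"
proof -
  have "snd (es ! t) = pt es n (Suc t)"
  proof (cases "Suc t < n")
    case True
    then have "snd (es ! t) = fst (es ! Suc t)" using assms(1) unfolding is_arc_def by blast
    then show ?thesis using True unfolding pt_def by simp
  next
    case False
    then have "n - 1 = t" using assms(2) by linarith
    then show ?thesis using False unfolding pt_def by simp
  qed
  moreover have "fst (es ! t) = pt es n t" using assms(2) unfolding pt_def by simp
  ultimately show ?thesis by (metis prod.collapse)
qed
lemma arc_edge:
  assumes "is_arc E0 n es" "t < n"
  shows "(pt es n t, pt es n (Suc t)) \<in> E0"
proof -
  have "es ! t \<in> set es" using assms unfolding is_arc_def by auto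
  then have "es ! t \<in> E0" using assms(1) unfolding is_arc_def by blast
  then show ?thesis unfolding arc_nth[OF assms] .
qed

lemma arc_lv:
  assumes "is_arc E0 n es" "t \<le> n"
  shows "lv (pt es n t) = lv (pt es n 0) + int t"
  using assms(2)
proof (induction t)
  case 0
  then show ?case by simp
next
  case (Suc t)
  then have "lv (pt es n (Suc t)) = lv (pt es n t) + 1"
    using arc_edge[OF assms(1), of t] by (simp add: E0_iff)
  then show ?case using Suc by simp
qed

lemma arc_ne:
  assumes "is_arc E0 n es" "t < n"
  shows "fb (pt es n t) \<noteq> fa (pt es n (Suc t))"
  using arc_edge[OF assms] by (simp add: E0_iff)

lemma hat_trans:
  assumes a1: "is_arc E0 n es1" and a2: "is_arc E0 n es2"
  shows "\<exists>f. automorphism UNIV E0 f \<and> map_edges f es1 = es2"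
proof -
  define p where "p = pt es1 n"
  define q where "q = pt es2 n"
  define A where "A s = (if s \<le> n then fa (p s) else fb (p (s - 1)))" for s
  define B where "B s = (if 1 \<le> s then fb (p (s - 1)) else fa (p s))" for s
  define C where "C s = (if s \<le> n then fa (q s) else fb (q (s - 1)))" for s
  define D where "D s = (if 1 \<le> s then fb (q (s - 1)) else fa (q s))" for s
  define L0 where "L0 = lv (p 0)"
  define d where "d = lv (q 0) - L0"
  have ex: "\<exists>g. P3 g \<and> g (A s) = C s \<and> g (B s) = D s" for s
  proof (rule perm_ex)
    show "A s < 3" "B s < 3" "C s < 3" "D s < 3" by (auto simp: A_def B_def C_def D_def)
    show "(A s = B s) = (C s = D s)"
    proof (cases "s = 0")
      case True then show ?thesis by (simp add: A_def B_def C_def D_def)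
    next
      case False
      show ?thesis
      proof (cases "s \<le> n")
        case True
        then have "s - 1 < n" "Suc (s - 1) = s" using False by auto
        then have "fb (p (s - 1)) \<noteq> fa (p s)" "fb (q (s - 1)) \<noteq> fa (q s)"
          using arc_ne[OF a1] arc_ne[OF a2] unfolding p_def q_def by metis+
        then show ?thesis using True False by (auto simp: A_def B_def C_def D_def)
      next
        case F2: False
        then show ?thesis using False by (simp add: A_def B_def C_def D_def)
      qed
    qed
  qed
  define G where "G j = (SOME g. P3 g \<and> g (A (nat (j - L0))) = C (nat (j - L0)) \<and>
                              g (B (nat (j - L0))) = D (nat (j - L0)))" for j
  have G: "P3 (G j) \<and> G j (A (nat (j - L0))) = C (nat (j - L0)) \<and>
                              G j (B (nat (j - L0))) = D (nat (j - L0))" for j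
    unfolding G_def by (rule someI_ex[OF ex])
  have GP: "\<forall>j. P3 (G j)" using G by blast
  define f where "f = fmap d G"
  have pts: "f (p t) = q t" if "t \<le> n" for t
  proof -
    have lp: "lv (p t) = L0 + int t" using arc_lv[OF a1 that] unfolding p_def L0_def by simp
    have lq: "lv (q t) = lv (q 0) + int t" using arc_lv[OF a2 that] unfolding q_def by simp
    have g1: "G (lv (p t)) (fa (p t)) = fa (q t)"
      using G[of "lv (p t)"] lp that by (simp add: A_def C_def)
    have g2: "G (lv (p t) + 1) (fb (p t)) = fb (q t)"
    proof -
      have nn: "nat (int t + 1) = Suc t" by simp
      show ?thesis using G[of "lv (p t) + 1"] lp that by (simp add: B_def D_def nn)
    qed
    have "lv (f (p t)) = lv (q t)" using lp lq fmap_simps[OF GP] unfolding f_def d_def by simp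
    moreover have "fa (f (p t)) = fa (q t)" using g1 fmap_simps[OF GP] unfolding f_def by simp
    moreover have "fb (f (p t)) = fb (q t)" using g2 fmap_simps[OF GP] unfolding f_def by simp
    ultimately show ?thesis using vert_eq[of "f (p t)" "q t"] by blast
  qed
  have "map_edges f es1 = es2"
  proof (rule nth_equalityI)
    show "length (map_edges f es1) = length es2" using a1 a2 by (simp add: map_edges_def is_arc_def)
    fix t assume "t < length (map_edges f es1)"
    then have t: "t < n" using a1 by (simp add: map_edges_def is_arc_def)
    then have "map_edges f es1 ! t = (f (p t), f (p (Suc t)))"
      using a1 arc_nth[OF a1 t] unfolding map_edges_def is_arc_def p_def by simp
    also have "\<dots> = (q t, q (Suc t))" using pts t by simp
    also have "\<dots> = es2 ! t" using arc_nth[OF a2 t] unfolding q_def by simp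
    finally show "map_edges f es1 ! t = es2 ! t" .
  qed
  then show ?thesis using fmap_aut[OF GP] unfolding f_def by blast
qed

lemma hat: "highly_arc_transitive UNIV E0"
  unfolding highly_arc_transitive_def
proof (rule allI, rule conjI)
  fix n
  show "\<exists>es. is_arc E0 n es"
  proof
    show "is_arc E0 n (map (\<lambda>t. (enc (int t) 1 0, enc (int (Suc t)) 1 0)) [0..<n])"
      unfolding is_arc_def by (auto simp: E0_iff)
  qed
  show "\<forall>es1 es2. is_arc E0 n es1 \<and> is_arc E0 n es2 \<longrightarrow>
          (\<exists>f. automorphism UNIV E0 f \<and> map_edges f es1 = es2)"
    using hat_trans by blast
qed


lemma third: "\<exists>c::nat. c < 3 \<and> c \<noteq> p \<and> c \<noteq> q"
proof (cases "p = 0 \<or> q = 0")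
  case True
  then show ?thesis
  proof (cases "p = 1 \<or> q = 1")
    case True then show ?thesis using \<open>p = 0 \<or> q = 0\<close> by (intro exI[of _ 2]) auto
  next
    case False then show ?thesis by (intro exI[of _ 1]) auto
  qed
next
  case False then show ?thesis by (intro exI[of _ 0]) auto
qed

abbreviation R where "R \<equiv> (E0 \<union> E0\<inverse>)\<^sup>*"

lemma R_sym: "(x, y) \<in> R \<Longrightarrow> (y, x) \<in> R"
proof -
  assume "(x, y) \<in> R"
  then have "(y, x) \<in> ((E0 \<union> E0\<inverse>)\<inverse>)\<^sup>*" by (rule rtrancl_converseI)
  moreover have "(E0 \<union> E0\<inverse>)\<inverse> = E0 \<union> E0\<inverse>" by auto
  ultimately show ?thesis by simp
qed

lemma R_adj:
  assumes "lv v = lv u + 1"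
  shows "(u, v) \<in> R"
proof -
  define x where "x = enc (lv u) 0 ((fa v + 1) mod 3)"
  obtain c where c: "c < 3" "c \<noteq> fb u" "c \<noteq> fb x" using third by blast
  define w where "w = enc (lv v) c 0"
  have x: "lv x = lv u" "fb x = (fa v + 1) mod 3" unfolding x_def by simp_all
  have w: "lv w = lv v" "fa w = c" unfolding w_def using c by simp_all
  have "fb x \<noteq> fa v" using x(2) fa_lt[of v] by (simp add: mod_Suc)
  then have e1: "(u, w) \<in> E0" "(x, w) \<in> E0" "(x, v) \<in> E0"
    using assms c x w by (auto simp: E0_iff)
  have "(u, w) \<in> R" using e1(1) by blast
  moreover have "(w, x) \<in> R" using e1(2) by blast
  moreover have "(x, v) \<in> R" using e1(3) by blast
  ultimately show ?thesis by (meson rtrancl_trans)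
qed

lemma R_k: "lv v = lv u + int k \<Longrightarrow> (u, v) \<in> R"
proof (induction k arbitrary: v)
  case 0
  define w where "w = enc (lv u + 1) 0 0"
  have "(u, w) \<in> R" "(v, w) \<in> R" using 0 R_adj unfolding w_def by simp_all
  then show ?case using R_sym by (meson rtrancl_trans)
next
  case (Suc k)
  define w where "w = enc (lv u + int k) 0 0"
  have "(u, w) \<in> R" using Suc.IH unfolding w_def by simp
  moreover have "(w, v) \<in> R" using R_adj Suc.prems unfolding w_def by simp
  ultimately show ?case by (meson rtrancl_trans)
qed

lemma conn: "dconnected UNIV E0"
  unfolding dconnected_def
proof (intro conjI ballI)
  show "(UNIV :: nat set) \<noteq> {}" by simp
  fix u v :: nat
  show "(u, v) \<in> R"
  proof (cases "lv u \<le> lv v")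
    case True
    then have "lv v = lv u + int (nat (lv v - lv u))" by simp
    then show ?thesis by (rule R_k)
  next
    case False
    then have "lv u = lv v + int (nat (lv u - lv v))" by simp
    then show ?thesis using R_k R_sym by blast
  qed
qed

lemma epi: "epi_Z UNIV E0 lv"
  unfolding epi_Z_def
proof
  show "\<forall>(u, v)\<in>E0. lv v = lv u + 1" by (auto simp: E0_iff)
  have "i \<in> range lv" for i
    using enc_simps(1)[of 0 0 i] by (metis rangeI zero_less_numeral)
  then show "lv ` UNIV = UNIV" by blast
qed

lemma fib: "finite {v \<in> UNIV. lv v = i}"
proof -
  have "{v \<in> UNIV. lv v = i} \<subseteq> (\<lambda>(a, b). enc i a b) ` ({..<3} \<times> {..<3})"
  proof
    fix v assume "v \<in> {v \<in> UNIV. lv v = i}"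
    then have "v = enc i (fa v) (fb v)" using enc_dec[of v] by simp
    then show "v \<in> (\<lambda>(a, b). enc i a b) ` ({..<3} \<times> {..<3})"
      by (metis (no_types, lifting) SigmaI case_prod_conv fa_lt fb_lt imageI lessThan_iff)
  qed
  then show ?thesis by (rule finite_subset) simp
qed

lemma notcb:
  assumes e: "e \<in> E0"
  shows "\<not> complete_bipartite (Delta_verts E0 e) (Delta_edges E0 e)"
proof
  assume "complete_bipartite (Delta_verts E0 e) (Delta_edges E0 e)"
  then obtain A B where AB: "Delta_edges E0 e = A \<times> B" unfolding complete_bipartite_def by blast
  obtain u v where uv: "e = (u, v)" by fastforce
  have ev: "lv v = lv u + 1" "fb u \<noteq> fa v" using e uv by (auto simp: E0_iff)
  obtain c where c: "c < 3" "c \<noteq> fa v" "c \<noteq> fb u" using third by blast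
  define x where "x = enc (lv u) 0 c"
  define y where "y = enc (lv v) (fb u) 0"
  have x: "lv x = lv u" "fb x = c" unfolding x_def using c by simp_all
  have y: "lv y = lv v" "fa y = fb u" unfolding y_def by simp_all
  have e2: "(x, v) \<in> E0" "(x, y) \<in> E0" using x y c ev by (auto simp: E0_iff)
  have aw: "alternating_walk E0 [e, (x, v), (x, y)]"
    unfolding alternating_walk_def using e e2 uv
    by (auto simp: share_init_def share_term_def nth_Cons' )
  then have "reachable E0 e e" "reachable E0 e (x, y)"
    unfolding reachable_def by (metis list.set_intros(1), metis list.set_intros insert_iff)
  then have "e \<in> A \<times> B" "(x, y) \<in> A \<times> B" using AB unfolding Delta_edges_def by auto
  then have "(u, y) \<in> Delta_edges E0 e" using AB uv by auto
  then have "(u, y) \<in> E0" unfolding Delta_edges_def reachable_def alternating_walk_def by auto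
  then show False using y by (simp add: E0_iff)
qed

theorem mainTheorem3:
  shows "\<exists>(V :: nat set) (E :: (nat \<times> nat) set) (\<phi> :: nat \<Rightarrow> int).
     digraph V E \<and> dconnected V E \<and> highly_arc_transitive V E \<and> epi_Z V E \<phi> \<and>
     (\<forall>i. finite {v\<in>V. \<phi> v = i}) \<and>
     (\<forall>e\<in>E. \<not> complete_bipartite (Delta_verts E e) (Delta_edges E e))"
  using conn hat epi fib notcb by (intro exI[of _ UNIV] exI[of _ E0] exI[of _ lv]) (auto simp: digraph_def)

end
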